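(* Let $\mathcal{S}\in\mathscr{W}$ be $C^3$-smooth with an isolated umbilic point at $\theta=0$, and let $\alpha\in\mathbb{R}$. Then (1) if $\mu_0>\alpha+1$, then $\lim_{\theta\to0}\frac{s(\theta)}{\sin^\alpha\theta}=0$; (2) if $\mu_0<\alpha+1$, then $\lim_{\theta\to0}\frac{s(\theta)}{\sin^\alpha\theta}=\pm\infty$. If $\mathcal{S}$ has an isolated umbilic point at $\theta=\pi$, then the value of $\mu_\pi$ dictates the behaviour of $s/\sin^\alpha\theta$ as $\theta\to\pi$ in the same way.
   Context: $\mathscr{W}$ is the set of embedded $C^2$-smooth topological 2-spheres in $\mathbb{R}^3$ that are rotationally symmetric and strictly convex. A surface in $\mathscr{W}$ is parametrised by the inverse Gauss map with $\theta\in[0,\pi]$ the angle between the outward normal and the symmetry axis ($\theta=0,\pi$ are the poles). With support function $r(\theta)=\vec X\cdot\hat n$, the radii of curvature are $r_1=\frac{\cos^2\theta}{\sin\theta}\frac{d}{d\theta}\left(\frac{r}{\cos\theta}\right)$, $r_2=r''+r$, and the astigmatism is $s=r_2-r_1$; umbilic points are where $s=0$. The umbilic slopes are $\mu_0=\lim_{\theta\to0}\frac{r_2(\theta)-r_2(0)}{r_1(\theta)-r_1(0)}$ and $\mu_\pi=\lim_{\theta\to\pi}\frac{r_2(\theta)-r_2(\pi)}{r_1(\theta)-r_1(\pi)}$. *)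

theory Defs
  imports "HOL-Analysis.Analysis"
begin

text \<open>A rotationally symmetric strictly convex sphere is described by its support
function r(theta), theta in [0,pi] the angle between the outward normal and the axis.
C^3-smoothness of the surface, together with smoothness at the poles, is encoded by
requiring that r extends to a C^3 function on the real line which is even about
theta = 0 and about theta = pi (the smooth extension through the poles).\<close>

definition C3_real :: "(real \<Rightarrow> real) \<Rightarrow> bool" where
  "C3_real f \<longleftrightarrow>
     (\<forall>x. f differentiable at x) \<and>
     (\<forall>x. deriv f differentiable at x) \<and>
     (\<forall>x. deriv (deriv f) differentiable at x) \<and>
     continuous_on UNIV (deriv (deriv (deriv f)))"

text \<open>Radii of curvature. r2 = r'' + r. The paper's
r1 = cos^2/sin * d/dtheta (r / cos) equals r + r' cos / sin away from the poles;
at the poles (sin = 0) r1 is defined as its limit value r'' + r.\<close>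

definition radius2 :: "(real \<Rightarrow> real) \<Rightarrow> real \<Rightarrow> real" where
  "radius2 r \<theta> = deriv (deriv r) \<theta> + r \<theta>"

definition radius1 :: "(real \<Rightarrow> real) \<Rightarrow> real \<Rightarrow> real" where
  "radius1 r \<theta> = (if sin \<theta> = 0 then radius2 r \<theta>
                    else r \<theta> + deriv r \<theta> * cos \<theta> / sin \<theta>)"

definition astig :: "(real \<Rightarrow> real) \<Rightarrow> real \<Rightarrow> real" where
  "astig r \<theta> = radius2 r \<theta> - radius1 r \<theta>"

definition in_W3 :: "(real \<Rightarrow> real) \<Rightarrow> bool" where
  "in_W3 r \<longleftrightarrow> C3_real r \<and>
     (\<forall>\<theta>. r (- \<theta>) = r \<theta>) \<and>
     (\<forall>\<theta>. r (pi + \<theta>) = r (pi - \<theta>)) \<and>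
     (\<forall>\<theta>\<in>{0..pi}. radius1 r \<theta> > 0 \<and> radius2 r \<theta> > 0)"

definition isolated_umbilic_0 :: "(real \<Rightarrow> real) \<Rightarrow> bool" where
  "isolated_umbilic_0 r \<longleftrightarrow> astig r 0 = 0 \<and>
     (\<exists>e>0. \<forall>\<theta>. 0 < \<theta> \<and> \<theta> < e \<longrightarrow> astig r \<theta> \<noteq> 0)"

definition isolated_umbilic_pi :: "(real \<Rightarrow> real) \<Rightarrow> bool" where
  "isolated_umbilic_pi r \<longleftrightarrow> astig r pi = 0 \<and>
     (\<exists>e>0. \<forall>\<theta>. pi - e < \<theta> \<and> \<theta> < pi \<longrightarrow> astig r \<theta> \<noteq> 0)"

definition umbilic_slope_0 :: "(real \<Rightarrow> real) \<Rightarrow> ereal \<Rightarrow> bool" where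
  "umbilic_slope_0 r \<mu> \<longleftrightarrow>
     ((\<lambda>\<theta>. ereal ((radius2 r \<theta> - radius2 r 0) / (radius1 r \<theta> - radius1 r 0)))
        \<longlongrightarrow> \<mu>) (at_right 0)"

definition umbilic_slope_pi :: "(real \<Rightarrow> real) \<Rightarrow> ereal \<Rightarrow> bool" where
  "umbilic_slope_pi r \<mu> \<longleftrightarrow>
     ((\<lambda>\<theta>. ereal ((radius2 r \<theta> - radius2 r pi) / (radius1 r \<theta> - radius1 r pi)))
        \<longlongrightarrow> \<mu>) (at_left pi)"

end

theory Submission
  imports Defs "HOL-Real_Asymp.Real_Asymp"
begin

locale core =
  fixes F s G g :: "real \<Rightarrow> real" and e L :: real
  assumes e: "0 < e" "e \<le> 1"
  and dF: "\<And>x. 0 < x \<Longrightarrow> x < e \<Longrightarrow> (F has_real_derivative s x * cos x / sin x) (at x)"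
  and spos: "\<And>x. 0 < x \<Longrightarrow> x < e \<Longrightarrow> s x > 0"
  and GFs: "\<And>x. 0 < x \<Longrightarrow> x < e \<Longrightarrow> G x = F x + s x"
  and dG: "\<And>x. 0 < x \<Longrightarrow> x < e \<Longrightarrow> (G has_real_derivative g x) (at x)"
  and gb: "\<And>x. 0 < x \<Longrightarrow> x < e \<Longrightarrow> \<bar>g x\<bar> \<le> L"
  and L1: "L \<ge> 1"
  and F0: "(F \<longlongrightarrow> 0) (at_right 0)"
  and G0: "(G \<longlongrightarrow> 0) (at_right 0)"
begin

lemma trig:
  assumes "0 < x" "x < e"
  shows "0 < sin x \<and> 0 < cos x \<and> cos 1 \<le> cos x \<and> sin x \<le> x \<and> sin x \<le> 1"
proof -
  have x1: "x \<le> 1" using assms e by linarith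
  have "0 < sin x" using assms x1 pi_gt3 by (intro sin_gt_zero) auto
  moreover have "0 < cos x" using assms x1 pi_gt3 by (intro cos_gt_zero) auto
  moreover have "cos 1 \<le> cos x" using assms x1 pi_gt3 by (intro cos_monotone_0_pi_le) auto
  moreover have "sin x \<le> x" using assms by (intro sin_x_le_x) auto
  ultimately show ?thesis by simp
qed

lemma cos1: "cos (1::real) > 0"
  using cos_gt_zero[of 1] pi_gt3 by simp

lemma dF_pos: "0 < x \<Longrightarrow> x < e \<Longrightarrow> s x * cos x / sin x > 0"
  using trig spos by auto

lemma Fmono: assumes "0 < x" "x < y" "y < e" shows "F x < F y"
proof (rule DERIV_pos_imp_increasing[OF assms(2)])
  fix z assume "x \<le> z" "z \<le> y"
  then show "\<exists>d. DERIV F z :> d \<and> d > 0" using assms dF dF_pos by (meson less_le_trans le_less_trans)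
qed

lemma Fpos: assumes "0 < x" "x < e" shows "F x > 0"
proof -
  have "0 \<le> F (x/2)"
  proof (rule tendsto_upperbound[OF F0])
    show "\<forall>\<^sub>F y in at_right 0. F y \<le> F (x/2)"
      unfolding eventually_at_right_field
      using assms by (intro exI[of _ "x/2"]) (auto intro!: less_imp_le[OF Fmono])
  qed simp
  also have "F (x/2) < F x" using assms by (intro Fmono) auto
  finally show ?thesis .
qed

lemma Gpos: "0 < x \<Longrightarrow> x < e \<Longrightarrow> G x > F x"
  using GFs spos by force

lemma Qgt1: "0 < x \<Longrightarrow> x < e \<Longrightarrow> G x / F x > 1"
  using Gpos Fpos by simp

lemma Glip: assumes "0 < y" "y \<le> x" "x < e"
  shows "\<bar>G x - G y\<bar> \<le> L * (x - y)"
proof (cases "y = x")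
  case False
  then have "y < x" using assms by simp
  from MVT2[OF this, of G g] obtain z where z: "y < z" "z < x" "G x - G y = (x - y) * g z"
    using dG assms by force
  have "\<bar>g z\<bar> \<le> L" using gb z assms by simp
  then show ?thesis using z(3) \<open>y < x\<close> by (simp add: abs_mult mult.commute mult_right_mono)
qed simp

lemma Gle: assumes "0 < x" "x < e" shows "G x \<le> L * x"
proof (rule tendsto_lowerbound)
  have "((\<lambda>y. G y + L * (x - y)) \<longlongrightarrow> 0 + L * (x - 0)) (at_right 0)"
    by (intro tendsto_intros G0)
  then show "((\<lambda>y. G y + L * (x - y)) \<longlongrightarrow> L * x) (at_right 0)" by simp
  show "\<forall>\<^sub>F y in at_right 0. G x \<le> G y + L * (x - y)"
    unfolding eventually_at_right_field
  proof (intro exI[of _ x] conjI allI impI)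
    fix y assume "0 < y" "y < x"
    then have "\<bar>G x - G y\<bar> \<le> L * (x - y)" using assms by (intro Glip) auto
    then show "G x \<le> G y + L * (x - y)" by (simp add: abs_le_iff)
  qed (use assms in auto)
qed simp

definition H :: "real \<Rightarrow> real \<Rightarrow> real" where
  "H \<beta> z = ln (F z) - (\<beta> - 1) * ln (sin z)"

lemma H_deriv: assumes "0 < z" "z < e"
  shows "DERIV (H \<beta>) z :> cos z / sin z * (G z / F z - \<beta>)"
proof -
  have tz: "0 < sin z" "0 < cos z" using trig assms by auto
  have Fz: "F z > 0" using Fpos assms by auto
  have d1: "DERIV (\<lambda>z. ln (F z)) z :> 1 / F z * (s z * cos z / sin z)"
    by (rule DERIV_chain2[OF DERIV_ln_divide[OF Fz] dF[OF assms]])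
  have d2: "DERIV (\<lambda>z. ln (sin z)) z :> 1 / sin z * cos z"
    by (rule DERIV_chain2[OF DERIV_ln_divide[OF tz(1)] DERIV_sin])
  have "DERIV (H \<beta>) z :> 1 / F z * (s z * cos z / sin z) - (\<beta> - 1) * (1 / sin z * cos z)"
    unfolding H_def by (rule DERIV_diff[OF d1 DERIV_cmult[OF d2]])
  moreover have "1 / F z * (s z * cos z / sin z) - (\<beta> - 1) * (1 / sin z * cos z)
      = cos z / sin z * (G z / F z - \<beta>)"
    using GFs[OF assms] Fz tz by (simp add: field_simps)
  ultimately show ?thesis by simp
qed

lemma H_exp: assumes "0 < z" "z < e"
  shows "F z / sin z powr (\<beta> - 1) = exp (H \<beta> z)"
proof -
  have tz: "0 < sin z" using trig assms by auto
  have Fz: "F z > 0" using Fpos assms by auto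
  show ?thesis using tz Fz unfolding H_def powr_def by (simp add: exp_diff)
qed

lemma H_cont: assumes "0 < x" "y < e" shows "continuous_on {x..y} (H \<beta>)"
proof (rule continuous_at_imp_continuous_on, intro ballI)
  fix z assume "z \<in> {x..y}"
  then have "0 < z" "z < e" using assms by auto
  from H_deriv[OF this] show "isCont (H \<beta>) z" by (rule DERIV_isCont)
qed

lemma ratio_mono:
  assumes "0 < x" "x \<le> y" "y < e" and Qb: "\<And>z. x < z \<Longrightarrow> z < y \<Longrightarrow> \<beta> \<le> G z / F z"
  shows "F x / sin x powr (\<beta> - 1) \<le> F y / sin y powr (\<beta> - 1)"
proof -
  have "H \<beta> x \<le> H \<beta> y"
  proof (rule DERIV_nonneg_imp_increasing_open[OF assms(2) _ H_cont[OF assms(1,3)]])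
    fix z assume z: "x < z" "z < y"
    then have z': "0 < z" "z < e" using assms by auto
    have "0 \<le> cos z / sin z * (G z / F z - \<beta>)"
      using trig[OF z'] Qb[OF z] by (intro mult_nonneg_nonneg) auto
    with H_deriv[OF z'] show "\<exists>d. DERIV (H \<beta>) z :> d \<and> d \<ge> 0" by blast
  qed
  then show ?thesis using H_exp assms by simp
qed

lemma ratio_anti:
  assumes "0 < x" "x \<le> y" "y < e" and Qb: "\<And>z. x < z \<Longrightarrow> z < y \<Longrightarrow> G z / F z \<le> \<beta>"
  shows "F y / sin y powr (\<beta> - 1) \<le> F x / sin x powr (\<beta> - 1)"
proof -
  have "H \<beta> y \<le> H \<beta> x"
  proof (rule DERIV_nonpos_imp_decreasing_open[OF assms(2) _ H_cont[OF assms(1,3)]])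
    fix z assume z: "x < z" "z < y"
    then have z': "0 < z" "z < e" using assms by auto
    have "cos z / sin z * (G z / F z - \<beta>) \<le> 0"
      using trig[OF z'] Qb[OF z] by (intro mult_nonneg_nonpos) auto
    with H_deriv[OF z'] show "\<exists>d. DERIV (H \<beta>) z :> d \<and> d \<le> 0" by blast
  qed
  then show ?thesis using H_exp assms by simp
qed

lemma ev_e: "\<forall>\<^sub>F x in at_right 0. 0 < x \<and> x < e"
  unfolding eventually_at_right_field using e by (intro exI[of _ e]) auto

lemma upper_bound:
  assumes "\<forall>\<^sub>F x in at_right 0. \<beta> \<le> G x / F x"
  shows "\<exists>C\<ge>0. \<exists>b>0. b \<le> e \<and> (\<forall>x. 0 < x \<longrightarrow> x \<le> b \<longrightarrow> F x \<le> C * sin x powr (\<beta> - 1))"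
proof -
  obtain b where b: "b > 0" "\<And>y. 0 < y \<Longrightarrow> y < b \<Longrightarrow> \<beta> \<le> G y / F y"
    using assms unfolding eventually_at_right_field by auto
  define y0 where "y0 = min (b/2) (e/2)"
  have y0: "0 < y0" "y0 < b" "y0 < e" "y0 \<le> e" using b e unfolding y0_def by auto
  define C where "C = F y0 / sin y0 powr (\<beta> - 1)"
  have "C \<ge> 0" unfolding C_def using Fpos[of y0] y0 by simp
  moreover have "F x \<le> C * sin x powr (\<beta> - 1)" if "0 < x" "x \<le> y0" for x
  proof -
    have "F x / sin x powr (\<beta> - 1) \<le> C"
      unfolding C_def using that y0 by (intro ratio_mono b(2)) auto
    moreover have "sin x powr (\<beta> - 1) > 0" using trig[of x] that y0 by simp
    ultimately show ?thesis by (simp add: divide_le_eq)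
  qed
  ultimately show ?thesis using y0 by blast
qed

lemma lower_bound:
  assumes "\<forall>\<^sub>F x in at_right 0. G x / F x \<le> \<beta>"
  shows "\<exists>C>0. \<exists>b>0. b \<le> e \<and> (\<forall>x. 0 < x \<longrightarrow> x \<le> b \<longrightarrow> C * sin x powr (\<beta> - 1) \<le> F x)"
proof -
  obtain b where b: "b > 0" "\<And>y. 0 < y \<Longrightarrow> y < b \<Longrightarrow> G y / F y \<le> \<beta>"
    using assms unfolding eventually_at_right_field by auto
  define y0 where "y0 = min (b/2) (e/2)"
  have y0: "0 < y0" "y0 < b" "y0 < e" "y0 \<le> e" using b e unfolding y0_def by auto
  define C where "C = F y0 / sin y0 powr (\<beta> - 1)"
  have "C > 0" unfolding C_def using Fpos[of y0] trig[of y0] y0 by simp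
  moreover have "C * sin x powr (\<beta> - 1) \<le> F x" if "0 < x" "x \<le> y0" for x
  proof -
    have "C \<le> F x / sin x powr (\<beta> - 1)"
      unfolding C_def using that y0 by (intro ratio_anti b(2)) auto
    moreover have "sin x powr (\<beta> - 1) > 0" using trig[of x] that y0 by simp
    ultimately show ?thesis by (simp add: le_divide_eq)
  qed
  ultimately show ?thesis using y0 by blast
qed

lemma s_eq: "0 < x \<Longrightarrow> x < e \<Longrightarrow> s x = F x * (G x / F x - 1)"
  using GFs Fpos[of x] by (simp add: field_simps)

lemma s_bound:
  assumes x0: "0 < x0" "x0 < e" and C: "C \<ge> 0" and \<beta>: "\<beta> \<ge> 2"
    and Fb: "\<And>x. 0 < x \<Longrightarrow> x \<le> x0 \<Longrightarrow> F x \<le> C * sin x powr (\<beta> - 1)"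
  shows "s x0 \<le> (4 * C / cos 1 + 4 * L * C / cos 1 + 1) * sin x0 powr (\<beta> / 2)"
proof -
  define d where "d = s x0"
  define u where "u = sin x0"
  define c :: real where "c = cos 1"
  define h where "h = min (x0/2) (d/(2*L))"
  have d: "d > 0" unfolding d_def using spos x0 by auto
  have u: "0 < u" "u \<le> 1" "u \<le> x0" unfolding u_def using trig x0 by auto
  have c: "c > 0" unfolding c_def using cos1 by simp
  have h: "0 < h" "h \<le> x0/2" "h \<le> d/(2*L)" unfolding h_def using d L1 x0 by auto
  have sy: "s y \<ge> d/2" if y: "x0 - h \<le> y" "y \<le> x0" for y
  proof -
    have y0: "0 < y" using h y x0 by linarith
    have "\<bar>G x0 - G y\<bar> \<le> L * (x0 - y)" using y y0 x0 by (intro Glip) auto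
    also have "\<dots> \<le> L * h" using y L1 by (intro mult_left_mono) auto
    also have "\<dots> \<le> d/2" using h(3) L1 by (simp add: field_simps)
    finally have "\<bar>G x0 - G y\<bar> \<le> d/2" .
    then have "G y \<ge> G x0 - d/2" by arith
    moreover have "F y \<le> F x0"
      using y y0 x0 by (cases "y = x0") (auto intro!: less_imp_le[OF Fmono])
    moreover have "G x0 = F x0 + d" unfolding d_def using GFs x0 by simp
    ultimately show ?thesis using GFs[of y] y0 y x0 by simp
  qed
  have dFy: "s y * cos y / sin y \<ge> d * c / (2 * u)" if y: "x0 - h \<le> y" "y \<le> x0" for y
  proof -
    have y0: "0 < y" "y < e" using h y x0 by linarith+
    have ty: "0 < sin y" "c \<le> cos y" using trig[OF y0] unfolding c_def by auto
    have "sin y \<le> u" unfolding u_def using y y0 x0 e pi_gt3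
      by (intro sin_monotone_2pi_le) auto
    have "d * c / (2 * u) \<le> d * c / (2 * sin y)"
      using ty \<open>sin y \<le> u\<close> d c by (intro divide_left_mono mult_pos_pos) auto
    also have "\<dots> \<le> s y * cos y / sin y"
    proof -
      have "d * c \<le> (2 * s y) * cos y" using sy[OF y] ty d c by (intro mult_mono) auto
      then show ?thesis using ty by (simp add: divide_simps algebra_simps)
    qed
    finally show ?thesis .
  qed
  obtain z where z: "x0 - h < z" "z < x0" "F x0 - F (x0 - h) = (x0 - (x0 - h)) * (s z * cos z / sin z)"
    using MVT2[of "x0 - h" x0 F "\<lambda>z. s z * cos z / sin z"] h x0 dF by force
  have "F (x0 - h) > 0" using h x0 by (intro Fpos) auto
  then have "F x0 \<ge> h * (d * c / (2 * u))"
    using z dFy[of z] h by (smt (verit) mult_left_mono)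
  moreover have "F x0 \<le> C * u powr (\<beta> - 1)" unfolding u_def using Fb x0 by simp
  ultimately have key: "h * d * c \<le> 2 * C * u powr \<beta>"
  proof -
    assume a1: "F x0 \<ge> h * (d * c / (2 * u))" and a2: "F x0 \<le> C * u powr (\<beta> - 1)"
    have "h * d * c = 2 * u * (h * (d * c / (2 * u)))" using u by simp
    also have "\<dots> \<le> 2 * u * (C * u powr (\<beta> - 1))"
      using a1 a2 u by (intro mult_left_mono) auto
    also have "\<dots> = 2 * C * (u * u powr (\<beta> - 1))" by simp
    also have "u * u powr (\<beta> - 1) = u powr \<beta>" using powr_add[of u 1 "\<beta> - 1"] u by simp
    finally show ?thesis by simp
  qed
  define w where "w = u powr (\<beta> / 2)"
  have w: "w > 0" "w * w = u powr \<beta>" unfolding w_def using u by (auto simp: powr_add[symmetric])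
  have w2: "u powr (\<beta> - 1) \<le> w" unfolding w_def using u \<beta> by (intro powr_mono') auto
  define A where "A = 4 * L * C / c"
  have A: "A \<ge> 0" unfolding A_def using L1 C c by simp
  have "d \<le> 4 * C / c * w + (A + 1) * w"
  proof (cases "x0/2 \<le> d/(2*L)")
    case True
    then have "h = x0/2" unfolding h_def by simp
    with key have "x0 * d * c \<le> 4 * C * u powr \<beta>" by simp
    moreover have "u * d * c \<le> x0 * d * c" using u d c by (simp add: mult_right_mono)
    ultimately have "u * (d * c) \<le> u * (4 * C * u powr (\<beta> - 1))"
      using u by (simp add: powr_diff mult.assoc)
    then have "d * c \<le> 4 * C * u powr (\<beta> - 1)" using u by simp
    then have "d \<le> 4 * C / c * u powr (\<beta> - 1)" using c by (simp add: field_simps)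
    also have "\<dots> \<le> 4 * C / c * w" using w2 C c by (intro mult_left_mono) auto
    finally have "d \<le> 4 * C / c * w" .
    moreover have "0 \<le> (A + 1) * w" using A w by simp
    ultimately show ?thesis by linarith
  next
    case False
    then have "h = d/(2*L)" unfolding h_def by simp
    with key have "d * d * c \<le> 4 * L * C * u powr \<beta>" using L1 by (simp add: field_simps)
    then have dd: "d * d \<le> A * (w * w)" unfolding A_def using c w by (simp add: field_simps)
    have "d \<le> (A + 1) * w"
    proof (rule ccontr)
      assume "\<not> ?thesis"
      then have "(A + 1) * w < d" by simp
      then have "((A + 1) * w) * ((A + 1) * w) < d * d"
        using A w d by (intro mult_strict_mono) auto
      moreover have "A * (w * w) \<le> ((A + 1) * w) * ((A + 1) * w)"
        using A w by (simp add: algebra_simps mult_nonneg_nonneg)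
      ultimately show False using dd by simp
    qed
    then show ?thesis using C c w by (smt (verit) mult_nonneg_nonneg divide_nonneg_pos)
  qed
  then show ?thesis unfolding d_def w_def u_def A_def c_def by (simp add: algebra_simps)
qed

lemma ev_Q: assumes Q: "((\<lambda>x. ereal (G x / F x)) \<longlongrightarrow> \<mu>) (at_right 0)"
  shows "ereal a < \<mu> \<Longrightarrow> \<forall>\<^sub>F x in at_right 0. a \<le> G x / F x"
    and "\<mu> < ereal a \<Longrightarrow> \<forall>\<^sub>F x in at_right 0. G x / F x \<le> a"
proof -
  assume "ereal a < \<mu>"
  from order_tendstoD(1)[OF Q this] show "\<forall>\<^sub>F x in at_right 0. a \<le> G x / F x"
    by eventually_elim simp
next
  assume "\<mu> < ereal a"
  from order_tendstoD(2)[OF Q this] show "\<forall>\<^sub>F x in at_right 0. G x / F x \<le> a"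
    by eventually_elim simp
qed

lemma mu_ge1: assumes Q: "((\<lambda>x. ereal (G x / F x)) \<longlongrightarrow> \<mu>) (at_right 0)"
  shows "ereal 1 \<le> \<mu>"
proof (rule tendsto_lowerbound[OF Q])
  show "\<forall>\<^sub>F x in at_right 0. ereal 1 \<le> ereal (G x / F x)"
    using ev_e by eventually_elim (use Qgt1 in force)
qed simp

lemma mu_ne1: assumes Q: "((\<lambda>x. ereal (G x / F x)) \<longlongrightarrow> \<mu>) (at_right 0)"
  shows "\<mu> \<noteq> 1"
proof
  assume m1: "\<mu> = 1"
  have "\<forall>\<^sub>F x in at_right 0. G x / F x \<le> 3/2"
    by (rule ev_Q(2)[OF Q]) (simp add: m1 one_ereal_def)
  from lower_bound[OF this] obtain C b where Cb: "C > 0" "b > 0" "b \<le> e"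
    "\<And>x. 0 < x \<Longrightarrow> x \<le> b \<Longrightarrow> C * sin x powr (3/2 - 1) \<le> F x" by blast
  have lim: "filterlim (\<lambda>x. C * sin x powr (1/2) / x) at_top (at_right 0)"
    using Cb(1) by real_asymp
  have "\<forall>\<^sub>F x in at_right 0. C * sin x powr (1/2) / x \<le> L"
    unfolding eventually_at_right_field
  proof (intro exI[of _ b] conjI allI impI)
    fix x :: real assume x: "0 < x" "x < b"
    then have "C * sin x powr (1/2) \<le> F x" using Cb(4)[of x] by simp
    also have "F x < G x" using Gpos x Cb by simp
    also have "G x \<le> L * x" using Gle x Cb by simp
    finally show "C * sin x powr (1/2) / x \<le> L" using x by (simp add: divide_simps)
  qed (use Cb in auto)
  moreover have "\<forall>\<^sub>F x in at_right 0. L + 1 \<le> C * sin x powr (1/2) / x"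
    using lim by (simp add: filterlim_at_top)
  ultimately have "\<forall>\<^sub>F x in at_right (0::real). False"
    by eventually_elim simp
  then show False by simp
qed

theorem core_main:
  assumes Q: "((\<lambda>x. ereal (G x / F x)) \<longlongrightarrow> \<mu>) (at_right 0)"
  shows "(\<mu> > ereal (\<alpha> + 1) \<longrightarrow> ((\<lambda>x. s x / sin x powr \<alpha>) \<longlongrightarrow> 0) (at_right 0)) \<and>
         (\<mu> < ereal (\<alpha> + 1) \<longrightarrow> filterlim (\<lambda>x. s x / sin x powr \<alpha>) at_top (at_right 0))"
proof (intro conjI impI)
  have m1: "ereal 1 \<le> \<mu>" "\<mu> \<noteq> 1" using mu_ge1[OF Q] mu_ne1[OF Q] by auto
  {
    assume lt: "\<mu> < ereal (\<alpha> + 1)"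
    then obtain m where m: "\<mu> = ereal m" using m1 by (cases \<mu>) auto
    have m2: "1 < m" "m < \<alpha> + 1" using m1 lt m by (auto simp: one_ereal_def)
    define \<beta> where "\<beta> = (m + \<alpha> + 1) / 2"
    define c where "c = (m - 1) / 2"
    have \<beta>c: "m < \<beta>" "\<beta> < \<alpha> + 1" "c > 0" "1 + c < m" using m2 unfolding \<beta>_def c_def by (auto simp: field_simps)
    have e1: "\<forall>\<^sub>F x in at_right 0. G x / F x \<le> \<beta>" using \<beta>c m by (intro ev_Q(2)[OF Q]) auto
    have e2: "\<forall>\<^sub>F x in at_right 0. 1 + c \<le> G x / F x" using \<beta>c m by (intro ev_Q(1)[OF Q]) auto
    from lower_bound[OF e1] obtain C b where Cb: "C > 0" "b > 0" "b \<le> e"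
      "\<And>x. 0 < x \<Longrightarrow> x \<le> b \<Longrightarrow> C * sin x powr (\<beta> - 1) \<le> F x" by blast
    have e3: "\<forall>\<^sub>F x in at_right 0. 0 < x \<and> x < b"
      unfolding eventually_at_right_field using Cb by (intro exI[of _ b]) auto
    have lim: "filterlim (\<lambda>x. C * c * sin x powr (\<beta> - 1 - \<alpha>)) at_top (at_right 0)"
      using Cb(1) \<beta>c by real_asymp
    show "filterlim (\<lambda>x. s x / sin x powr \<alpha>) at_top (at_right 0)"
    proof (rule filterlim_at_top_mono[OF lim])
      show "\<forall>\<^sub>F x in at_right 0. C * c * sin x powr (\<beta> - 1 - \<alpha>) \<le> s x / sin x powr \<alpha>"
        using e2 e3
      proof eventually_elim
        case (elim x)
        then have x: "0 < x" "x < e" using Cb by auto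
        have sx: "0 < sin x" using trig[OF x] by simp
        have "C * c * sin x powr (\<beta> - 1 - \<alpha>) = (C * sin x powr (\<beta> - 1)) * c / sin x powr \<alpha>"
          by (simp add: powr_diff)
        also have "\<dots> \<le> F x * (G x / F x - 1) / sin x powr \<alpha>"
          using sx elim Cb(4)[of x] \<beta>c Cb(1) Fpos[OF x]
          by (intro divide_right_mono mult_mono) auto
        also have "\<dots> = s x / sin x powr \<alpha>" using s_eq[OF x] by simp
        finally show ?case .
      qed
    qed
  }
  {
    assume gt: "\<mu> > ereal (\<alpha> + 1)"
    show "((\<lambda>x. s x / sin x powr \<alpha>) \<longlongrightarrow> 0) (at_right 0)"
    proof (cases \<mu>)
      case (real m)
      have m2: "1 \<le> m" "\<alpha> + 1 < m" using m1 gt real by (auto simp: one_ereal_def)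
      define \<beta> where "\<beta> = (m + \<alpha> + 1) / 2"
      have \<beta>: "\<beta> < m" "\<alpha> + 1 < \<beta>" using m2 unfolding \<beta>_def by (auto simp: field_simps)
      have e1: "\<forall>\<^sub>F x in at_right 0. \<beta> \<le> G x / F x" using \<beta> real by (intro ev_Q(1)[OF Q]) auto
      have e2: "\<forall>\<^sub>F x in at_right 0. G x / F x \<le> m + 1" using real by (intro ev_Q(2)[OF Q]) auto
      from upper_bound[OF e1] obtain C b where Cb: "C \<ge> 0" "b > 0" "b \<le> e"
        "\<And>x. 0 < x \<Longrightarrow> x \<le> b \<Longrightarrow> F x \<le> C * sin x powr (\<beta> - 1)" by blast
      have e3: "\<forall>\<^sub>F x in at_right 0. 0 < x \<and> x < b"
        unfolding eventually_at_right_field using Cb by (intro exI[of _ b]) auto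
      have lim: "((\<lambda>x. C * m * sin x powr (\<beta> - 1 - \<alpha>)) \<longlongrightarrow> 0) (at_right 0)"
        using \<beta> by real_asymp
      show ?thesis
      proof (rule tendsto_sandwich[OF _ _ tendsto_const lim])
        show "\<forall>\<^sub>F x in at_right 0. 0 \<le> s x / sin x powr \<alpha>"
          using e3 by eventually_elim (use spos Cb in force)
        show "\<forall>\<^sub>F x in at_right 0. s x / sin x powr \<alpha> \<le> C * m * sin x powr (\<beta> - 1 - \<alpha>)"
          using e2 e3
        proof eventually_elim
          case (elim x)
          then have x: "0 < x" "x < e" using Cb by auto
          have sx: "0 < sin x" using trig[OF x] by simp
          have "s x / sin x powr \<alpha> = F x * (G x / F x - 1) / sin x powr \<alpha>" using s_eq[OF x] by simp
          also have "\<dots> \<le> (C * sin x powr (\<beta> - 1)) * m / sin x powr \<alpha>"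
            using sx elim Cb(4)[of x] Cb(1) Fpos[OF x] Qgt1[OF x]
            by (intro divide_right_mono mult_mono) auto
          also have "\<dots> = C * m * sin x powr (\<beta> - 1 - \<alpha>)"
            by (simp add: powr_diff)
          finally show ?case .
        qed
      qed
    next
      case PInf
      define \<beta> where "\<beta> = 2 * \<bar>\<alpha>\<bar> + 4"
      have \<beta>: "\<beta> \<ge> 2" "\<beta> / 2 - \<alpha> > 0" unfolding \<beta>_def by auto
      have e1: "\<forall>\<^sub>F x in at_right 0. \<beta> \<le> G x / F x" using PInf by (intro ev_Q(1)[OF Q]) auto
      from upper_bound[OF e1] obtain C b where Cb: "C \<ge> 0" "b > 0" "b \<le> e"
        "\<And>x. 0 < x \<Longrightarrow> x \<le> b \<Longrightarrow> F x \<le> C * sin x powr (\<beta> - 1)" by blast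
      have e3: "\<forall>\<^sub>F x in at_right 0. 0 < x \<and> x < b"
        unfolding eventually_at_right_field using Cb by (intro exI[of _ b]) auto
      define K where "K = 4 * C / cos 1 + 4 * L * C / cos 1 + 1"
      have lim: "((\<lambda>x. K * sin x powr (\<beta> / 2 - \<alpha>)) \<longlongrightarrow> 0) (at_right 0)"
        using \<beta> by real_asymp
      show ?thesis
      proof (rule tendsto_sandwich[OF _ _ tendsto_const lim])
        show "\<forall>\<^sub>F x in at_right 0. 0 \<le> s x / sin x powr \<alpha>"
          using e3 by eventually_elim (use spos Cb in force)
        show "\<forall>\<^sub>F x in at_right 0. s x / sin x powr \<alpha> \<le> K * sin x powr (\<beta> / 2 - \<alpha>)"
          using e3
        proof eventually_elim
          case (elim x)
          then have x: "0 < x" "x < e" using Cb by auto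
          have sx: "0 < sin x" using trig[OF x] by simp
          have "s x \<le> K * sin x powr (\<beta> / 2)"
            unfolding K_def using x Cb \<beta> elim by (intro s_bound) auto
          then have "s x / sin x powr \<alpha> \<le> K * sin x powr (\<beta> / 2) / sin x powr \<alpha>"
            using sx by (intro divide_right_mono) auto
          also have "\<dots> = K * sin x powr (\<beta> / 2 - \<alpha>)" by (simp add: powr_diff)
          finally show ?case .
        qed
      qed
    next
      case MInf
      then show ?thesis using m1 by simp
    qed
  }
qed

end

lemma at_to_right: "(f \<longlongrightarrow> l) (at (x::real)) \<Longrightarrow> (f \<longlongrightarrow> l) (at_right x)"
  by (rule tendsto_within_subset) auto

lemma sign_const:
  fixes f :: "real \<Rightarrow> real"
  assumes c: "continuous_on {a<..<b} f" and nz: "\<And>x. a < x \<Longrightarrow> x < b \<Longrightarrow> f x \<noteq> 0"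
  shows "(\<forall>x. a < x \<and> x < b \<longrightarrow> f x > 0) \<or> (\<forall>x. a < x \<and> x < b \<longrightarrow> f x < 0)"
proof (rule ccontr)
  assume "\<not> ?thesis"
  then obtain x y where xy: "a < x" "x < b" "a < y" "y < b" "f x \<le> 0" "f y \<ge> 0"
    by (metis linorder_not_less)
  have cxy: "continuous_on {min x y..max x y} f"
    by (rule continuous_on_subset[OF c]) (use xy in auto)
  have "\<exists>z. min x y \<le> z \<and> z \<le> max x y \<and> f z = 0"
  proof (cases "x \<le> y")
    case True
    then show ?thesis using IVT'[of f x 0 y] xy cxy by auto
  next
    case False
    then show ?thesis using IVT2'[of f x 0 y] xy cxy by auto
  qed
  then obtain z where "min x y \<le> z" "z \<le> max x y" "f z = 0" by blast
  moreover have "a < z" "z < b" using calculation xy by auto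
  ultimately show False using nz by blast
qed

lemma at0:
  fixes r :: "real \<Rightarrow> real" and \<alpha> :: real
  assumes C3: "C3_real r" and ev: "\<And>\<theta>. r (- \<theta>) = r \<theta>"
  shows "isolated_umbilic_0 r \<longrightarrow> (\<forall>\<mu>. umbilic_slope_0 r \<mu> \<longrightarrow>
            (\<mu> > ereal (\<alpha> + 1) \<longrightarrow>
               ((\<lambda>\<theta>. astig r \<theta> / sin \<theta> powr \<alpha>) \<longlongrightarrow> 0) (at_right 0)) \<and>
            (\<mu> < ereal (\<alpha> + 1) \<longrightarrow>
               filterlim (\<lambda>\<theta>. astig r \<theta> / sin \<theta> powr \<alpha>) at_top (at_right 0) \<or>
               filterlim (\<lambda>\<theta>. astig r \<theta> / sin \<theta> powr \<alpha>) at_bot (at_right 0)))"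
proof (intro impI allI)
  fix \<mu> assume iu: "isolated_umbilic_0 r" and us: "umbilic_slope_0 r \<mu>"
  define d1 where "d1 = deriv r"
  define d2 where "d2 = deriv d1"
  define d3 where "d3 = deriv d2"
  have D1: "\<And>x. DERIV r x :> d1 x" using C3 unfolding C3_real_def d1_def
    by (simp add: DERIV_deriv_iff_real_differentiable)
  have D2: "\<And>x. DERIV d1 x :> d2 x" using C3 unfolding C3_real_def d1_def d2_def
    by (simp add: DERIV_deriv_iff_real_differentiable)
  have D3: "\<And>x. DERIV d2 x :> d3 x" using C3 unfolding C3_real_def d1_def d2_def d3_def
    by (simp add: DERIV_deriv_iff_real_differentiable)
  have c3: "continuous_on UNIV d3" using C3 unfolding C3_real_def d1_def d2_def d3_def by simp
  have d10: "d1 0 = 0"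
  proof -
    have "DERIV (\<lambda>x. r (- x)) 0 :> - d1 0" using D1[of 0] DERIV_mirror[where f=r and x=0 and y="d1 0"] by simp
    then have "DERIV r 0 :> - d1 0" using ev by simp
    with D1[of 0] have "d1 0 = - d1 0" by (rule DERIV_unique)
    then show ?thesis by simp
  qed
  have r2: "\<And>x. radius2 r x = d2 x + r x" unfolding radius2_def d1_def d2_def by simp
  have r1: "\<And>x. 0 < x \<Longrightarrow> x < pi \<Longrightarrow> radius1 r x = r x + d1 x * cos x / sin x"
    unfolding radius1_def d1_def using sin_gt_zero by force
  have r10: "radius1 r 0 = radius2 r 0" unfolding radius1_def by simp
  have as: "\<And>x. 0 < x \<Longrightarrow> x < pi \<Longrightarrow> astig r x = d2 x - d1 x * cos x / sin x"
    unfolding astig_def using r1 r2 by simp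
  obtain e1 where e1: "e1 > 0" "\<And>x. 0 < x \<Longrightarrow> x < e1 \<Longrightarrow> astig r x \<noteq> 0"
    using iu unfolding isolated_umbilic_0_def by blast
  define e where "e = min e1 1"
  have e: "0 < e" "e \<le> 1" "e < pi" using e1 pi_gt3 unfolding e_def by auto
  have dF: "((\<lambda>x. radius1 r x - radius1 r 0) has_real_derivative astig r x * cos x / sin x) (at x)"
    if x: "0 < x" "x < pi" for x
  proof -
    have sx: "sin x \<noteq> 0" using sin_gt_zero x by force
    note d = DERIV_diff[OF DERIV_add[OF D1 DERIV_divide[OF DERIV_mult[OF D2 DERIV_cos] DERIV_sin sx]]
      DERIV_const[of "radius1 r 0"]]
    have sc: "cos x * cos x = 1 - sin x * sin x"
      using sin_cos_squared_add[of x] by (simp add: power2_eq_square)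
    have "((\<lambda>x. r x + d1 x * cos x / sin x - radius1 r 0) has_real_derivative
        astig r x * cos x / sin x) (at x)"
    proof (rule DERIV_cong[OF d])
      show "d1 x + ((d2 x * cos x + - sin x * d1 x) * sin x - d1 x * cos x * cos x) / (sin x * sin x) - 0 =
        astig r x * cos x / sin x"
        using sx sc unfolding as[OF x] by (simp add: field_simps)
    qed
    then show ?thesis
      by (rule has_field_derivative_transform_within_open[where S="{0<..<pi}"]) (use x r1 in auto)
  qed
  have dG: "((\<lambda>x. radius2 r x - radius2 r 0) has_real_derivative d3 x + d1 x) (at x)" for x
    unfolding r2 by (rule DERIV_cong[OF DERIV_diff[OF DERIV_add[OF D3 D1] DERIV_const]]) simp
  obtain B where B: "B \<ge> 0" "\<And>x. x \<in> {0..1} \<Longrightarrow> norm (d3 x + d1 x) \<le> B"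
  proof (rule continuous_on_compact_bound[of "{0..1}" "\<lambda>x. d3 x + d1 x"])
    have "continuous_on UNIV d1"
      using D2 by (intro continuous_at_imp_continuous_on) (auto intro: DERIV_isCont)
    then show "continuous_on {0..1} (\<lambda>x. d3 x + d1 x)"
      using c3 by (intro continuous_intros) (auto elim: continuous_on_subset)
  qed auto
  define L where "L = max B 1"
  have F0: "((\<lambda>x. radius1 r x - radius1 r 0) \<longlongrightarrow> 0) (at_right 0)"
  proof -
    have a: "((\<lambda>h. d1 h / h) \<longlongrightarrow> d2 0) (at 0)" using D2[of 0] d10 unfolding DERIV_def by simp
    have b: "((\<lambda>h. h * cos h / sin h) \<longlongrightarrow> 1) (at_right (0::real))" by real_asymp
    have c: "(r \<longlongrightarrow> r 0) (at_right 0)"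
      using DERIV_isCont[OF D1[of 0]] by (intro at_to_right) (simp add: isCont_def)
    have "((\<lambda>x. r x + (d1 x / x) * (x * cos x / sin x) - radius1 r 0) \<longlongrightarrow> r 0 + d2 0 * 1 - radius1 r 0) (at_right 0)"
      by (intro tendsto_intros c b at_to_right[OF a])
    then have "((\<lambda>x. r x + (d1 x / x) * (x * cos x / sin x) - radius1 r 0) \<longlongrightarrow> 0) (at_right 0)"
      using r10 r2 by simp
    moreover have "\<forall>\<^sub>F x in at_right 0. r x + (d1 x / x) * (x * cos x / sin x) - radius1 r 0 = radius1 r x - radius1 r 0"
      unfolding eventually_at_right_field
      by (intro exI[of _ pi]) (auto simp: r1 pi_gt_zero)
    ultimately show ?thesis using tendsto_cong by fast
  qed
  have G0: "((\<lambda>x. radius2 r x - radius2 r 0) \<longlongrightarrow> 0) (at_right 0)"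
  proof -
    have "isCont (\<lambda>x. radius2 r x - radius2 r 0) 0" using dG by (rule DERIV_isCont)
    then show ?thesis by (intro at_to_right) (simp add: isCont_def)
  qed
  have Q: "((\<lambda>x. ereal ((radius2 r x - radius2 r 0) / (radius1 r x - radius1 r 0))) \<longlongrightarrow> \<mu>) (at_right 0)"
    using us unfolding umbilic_slope_0_def .
  have contS: "continuous_on {0<..<e} (astig r)"
  proof (rule continuous_at_imp_continuous_on, intro ballI)
    fix x assume "x \<in> {0<..<e}"
    then have x: "0 < x" "x < pi" using e by auto
    have "isCont (\<lambda>x. d2 x - d1 x * cos x / sin x) x"
      using sin_gt_zero[OF x] DERIV_isCont[OF D3] DERIV_isCont[OF D2]
      by (intro continuous_intros) auto
    moreover have "\<forall>\<^sub>F y in nhds x. d2 y - d1 y * cos y / sin y = astig r y"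
      using eventually_nhds_in_open[of "{0<..<pi}" x] x
      by (auto elim!: eventually_mono simp: as)
    ultimately show "isCont (astig r) x" using isCont_cong[where f="\<lambda>x. d2 x - d1 x * cos x / sin x" and g="astig r"] by simp
  qed
  have sgn: "(\<forall>x. 0 < x \<and> x < e \<longrightarrow> astig r x > 0) \<or> (\<forall>x. 0 < x \<and> x < e \<longrightarrow> astig r x < 0)"
    by (rule sign_const[OF contS]) (use e1 in \<open>auto simp: e_def\<close>)
  show "(\<mu> > ereal (\<alpha> + 1) \<longrightarrow>
               ((\<lambda>\<theta>. astig r \<theta> / sin \<theta> powr \<alpha>) \<longlongrightarrow> 0) (at_right 0)) \<and>
            (\<mu> < ereal (\<alpha> + 1) \<longrightarrow>
               filterlim (\<lambda>\<theta>. astig r \<theta> / sin \<theta> powr \<alpha>) at_top (at_right 0) \<or>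
               filterlim (\<lambda>\<theta>. astig r \<theta> / sin \<theta> powr \<alpha>) at_bot (at_right 0))"
    using sgn
  proof
    assume pos: "\<forall>x. 0 < x \<and> x < e \<longrightarrow> astig r x > 0"
    interpret core "\<lambda>x. radius1 r x - radius1 r 0" "astig r" "\<lambda>x. radius2 r x - radius2 r 0"
      "\<lambda>x. d3 x + d1 x" e L
    proof
      show "\<And>x. 0 < x \<Longrightarrow> x < e \<Longrightarrow> \<bar>d3 x + d1 x\<bar> \<le> L"
      proof -
        fix x :: real assume "0 < x" "x < e"
        then have "norm (d3 x + d1 x) \<le> B" using e by (intro B(2)) auto
        then show "\<bar>d3 x + d1 x\<bar> \<le> L" unfolding L_def by simp
      qed
    qed (use e pos dF dG F0 G0 r10 in \<open>auto simp: L_def astig_def\<close>)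
    show ?thesis using core_main[OF Q, of \<alpha>] by blast
  next
    assume neg: "\<forall>x. 0 < x \<and> x < e \<longrightarrow> astig r x < 0"
    interpret core "\<lambda>x. - (radius1 r x - radius1 r 0)" "\<lambda>x. - astig r x" "\<lambda>x. - (radius2 r x - radius2 r 0)"
      "\<lambda>x. - (d3 x + d1 x)" e L
    proof
      show "\<And>x. 0 < x \<Longrightarrow> x < e \<Longrightarrow> \<bar>- (d3 x + d1 x)\<bar> \<le> L"
      proof -
        fix x :: real assume "0 < x" "x < e"
        then have "norm (d3 x + d1 x) \<le> B" using e by (intro B(2)) auto
        then show "\<bar>- (d3 x + d1 x)\<bar> \<le> L" unfolding L_def by simp
      qed
      show "\<And>x. 0 < x \<Longrightarrow> x < e \<Longrightarrow>
          ((\<lambda>x. - (radius1 r x - radius1 r 0)) has_real_derivative - astig r x * cos x / sin x) (at x)"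
      proof -
        fix x :: real assume "0 < x" "x < e"
        then show "((\<lambda>x. - (radius1 r x - radius1 r 0)) has_real_derivative - astig r x * cos x / sin x) (at x)"
          using e by (intro DERIV_cong[OF DERIV_minus[OF dF]]) auto
      qed
      show "\<And>x. ((\<lambda>x. - (radius2 r x - radius2 r 0)) has_real_derivative - (d3 x + d1 x)) (at x)"
        by (rule DERIV_minus[OF dG])
    qed (use e neg F0 G0 r10 tendsto_minus[OF F0] tendsto_minus[OF G0] in \<open>auto simp: L_def astig_def\<close>)
    have Q': "((\<lambda>x. ereal (- (radius2 r x - radius2 r 0) / - (radius1 r x - radius1 r 0))) \<longlongrightarrow> \<mu>) (at_right 0)"
      using Q by (simp only: divide_minus_left divide_minus_right minus_minus)
    from core_main[OF Q', of \<alpha>] have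
      A: "\<mu> > ereal (\<alpha> + 1) \<Longrightarrow> ((\<lambda>x. - astig r x / sin x powr \<alpha>) \<longlongrightarrow> 0) (at_right 0)" and
      B: "\<mu> < ereal (\<alpha> + 1) \<Longrightarrow> filterlim (\<lambda>x. - astig r x / sin x powr \<alpha>) at_top (at_right 0)"
      by auto
    show ?thesis
    proof (intro conjI impI)
      assume "\<mu> > ereal (\<alpha> + 1)"
      from tendsto_minus[OF A[OF this]]
      show "((\<lambda>\<theta>. astig r \<theta> / sin \<theta> powr \<alpha>) \<longlongrightarrow> 0) (at_right 0)" by simp
    next
      assume "\<mu> < ereal (\<alpha> + 1)"
      from B[OF this]
      have "filterlim (\<lambda>\<theta>. astig r \<theta> / sin \<theta> powr \<alpha>) at_bot (at_right 0)"
        unfolding filterlim_uminus_at_bot by simp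
      then show "filterlim (\<lambda>\<theta>. astig r \<theta> / sin \<theta> powr \<alpha>) at_top (at_right 0) \<or>
               filterlim (\<lambda>\<theta>. astig r \<theta> / sin \<theta> powr \<alpha>) at_bot (at_right 0)" by blast
    qed
  qed
qed


lemma filterlim_left_pi:
  "filterlim h F (at_left pi) \<longleftrightarrow> filterlim (\<lambda>\<theta>. h (pi - \<theta>)) F (at_right 0)"
  unfolding filterlim_at_left_to_right[of h F pi] filterlim_at_right_to_0[of _ F "- pi"]
  by simp

lemma refl_deriv:
  assumes D: "\<And>x. DERIV f x :> f' x"
  shows "DERIV (\<lambda>\<theta>. f (pi - \<theta>)) x :> - f' (pi - x)"
proof -
  have "DERIV (\<lambda>\<theta>. f (pi - \<theta>)) x :> f' (pi - x) * (0 - 1)"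
    by (rule DERIV_chain2[OF D DERIV_diff[OF DERIV_const DERIV_ident]])
  then show ?thesis by simp
qed

lemma refl_deriv_eq:
  assumes D: "\<And>x. DERIV f x :> f' x"
  shows "deriv (\<lambda>\<theta>. f (pi - \<theta>)) = (\<lambda>x. - f' (pi - x))"
  using refl_deriv[OF D] by (intro ext DERIV_imp_deriv)

lemma refl_C3:
  assumes C3: "C3_real r"
  defines "rr \<equiv> \<lambda>\<theta>. r (pi - \<theta>)"
  shows "C3_real rr"
    and "\<And>x. radius2 rr x = radius2 r (pi - x)"
    and "\<And>x. radius1 rr x = radius1 r (pi - x)"
    and "\<And>x. astig rr x = astig r (pi - x)"
proof -
  define d1 where "d1 = deriv r"
  define d2 where "d2 = deriv d1"
  define d3 where "d3 = deriv d2"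
  have D1: "\<And>x. DERIV r x :> d1 x" using C3 unfolding C3_real_def d1_def
    by (simp add: DERIV_deriv_iff_real_differentiable)
  have D2: "\<And>x. DERIV d1 x :> d2 x" using C3 unfolding C3_real_def d1_def d2_def
    by (simp add: DERIV_deriv_iff_real_differentiable)
  have D3: "\<And>x. DERIV d2 x :> d3 x" using C3 unfolding C3_real_def d1_def d2_def d3_def
    by (simp add: DERIV_deriv_iff_real_differentiable)
  have c3: "continuous_on UNIV d3" using C3 unfolding C3_real_def d1_def d2_def d3_def by simp
  have e1: "deriv rr = (\<lambda>x. - d1 (pi - x))" unfolding rr_def by (rule refl_deriv_eq[OF D1])
  have D1': "DERIV (\<lambda>x. - d1 (pi - x)) x :> - (- d2 (pi - x))" for x
    by (rule DERIV_minus[OF refl_deriv[OF D2]])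
  have e2: "deriv (deriv rr) = (\<lambda>x. d2 (pi - x))"
    unfolding e1 using D1' by (intro ext DERIV_imp_deriv) simp
  have D2': "DERIV (\<lambda>x. d2 (pi - x)) x :> - d3 (pi - x)" for x
    by (rule refl_deriv[OF D3])
  have e3: "deriv (deriv (deriv rr)) = (\<lambda>x. - d3 (pi - x))"
    unfolding e2 using D2' by (intro ext DERIV_imp_deriv) simp
  show "C3_real rr"
    unfolding C3_real_def
  proof (intro conjI allI)
    fix x
    show "rr differentiable at x" unfolding rr_def using refl_deriv[OF D1]
      by (auto simp: real_differentiable_def)
    show "deriv rr differentiable at x" unfolding e1 using D1'
      by (auto simp: real_differentiable_def)
    show "deriv (deriv rr) differentiable at x" unfolding e2 using D2'
      by (auto simp: real_differentiable_def)
  next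
    show "continuous_on UNIV (deriv (deriv (deriv rr)))" unfolding e3
      by (intro continuous_intros continuous_on_compose2[OF c3]) auto
  qed
  show r2: "\<And>x. radius2 rr x = radius2 r (pi - x)"
    unfolding radius2_def e2 by (simp add: d2_def d1_def rr_def)
  show r1: "\<And>x. radius1 rr x = radius1 r (pi - x)"
    unfolding radius1_def r2 e1 by (simp add: d1_def rr_def)
  show "\<And>x. astig rr x = astig r (pi - x)"
    unfolding astig_def r1 r2 by simp
qed

lemma atpi:
  fixes r :: "real \<Rightarrow> real" and \<alpha> :: real
  assumes C3: "C3_real r" and ev: "\<And>\<theta>. r (pi + \<theta>) = r (pi - \<theta>)"
  shows "isolated_umbilic_pi r \<longrightarrow> (\<forall>\<mu>. umbilic_slope_pi r \<mu> \<longrightarrow>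
            (\<mu> > ereal (\<alpha> + 1) \<longrightarrow>
               ((\<lambda>\<theta>. astig r \<theta> / sin \<theta> powr \<alpha>) \<longlongrightarrow> 0) (at_left pi)) \<and>
            (\<mu> < ereal (\<alpha> + 1) \<longrightarrow>
               filterlim (\<lambda>\<theta>. astig r \<theta> / sin \<theta> powr \<alpha>) at_top (at_left pi) \<or>
               filterlim (\<lambda>\<theta>. astig r \<theta> / sin \<theta> powr \<alpha>) at_bot (at_left pi)))"
proof (intro impI allI)
  fix \<mu> assume iu: "isolated_umbilic_pi r" and us: "umbilic_slope_pi r \<mu>"
  define rr where "rr = (\<lambda>\<theta>. r (pi - \<theta>))"
  note R = refl_C3[OF C3, folded rr_def]
  have evr: "\<And>\<theta>. rr (- \<theta>) = rr \<theta>" unfolding rr_def using ev by simp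
  have iu': "isolated_umbilic_0 rr"
  proof -
    obtain e where e: "e > 0" "\<And>\<theta>. pi - e < \<theta> \<Longrightarrow> \<theta> < pi \<Longrightarrow> astig r \<theta> \<noteq> 0"
      using iu unfolding isolated_umbilic_pi_def by blast
    show ?thesis unfolding isolated_umbilic_0_def R(4)
      using iu e unfolding isolated_umbilic_pi_def by (intro conjI exI[of _ e]) auto
  qed
  have us': "umbilic_slope_0 rr \<mu>"
    using us unfolding umbilic_slope_0_def umbilic_slope_pi_def R(2,3) filterlim_left_pi by simp
  have A: "\<And>\<theta>. astig rr \<theta> / sin \<theta> powr \<alpha> = astig r (pi - \<theta>) / sin (pi - \<theta>) powr \<alpha>"
    using R(4) by simp
  from at0[OF R(1) evr, of \<alpha>] iu' us' show "(\<mu> > ereal (\<alpha> + 1) \<longrightarrow>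
               ((\<lambda>\<theta>. astig r \<theta> / sin \<theta> powr \<alpha>) \<longlongrightarrow> 0) (at_left pi)) \<and>
            (\<mu> < ereal (\<alpha> + 1) \<longrightarrow>
               filterlim (\<lambda>\<theta>. astig r \<theta> / sin \<theta> powr \<alpha>) at_top (at_left pi) \<or>
               filterlim (\<lambda>\<theta>. astig r \<theta> / sin \<theta> powr \<alpha>) at_bot (at_left pi))"
    unfolding filterlim_left_pi[where h="\<lambda>\<theta>. astig r \<theta> / sin \<theta> powr \<alpha>"] A by blast
qed

theorem proposition2p2:
  fixes r :: "real \<Rightarrow> real" and \<alpha> :: real
  assumes "in_W3 r"
  shows "(isolated_umbilic_0 r \<longrightarrow> (\<forall>\<mu>. umbilic_slope_0 r \<mu> \<longrightarrow>
            (\<mu> > ereal (\<alpha> + 1) \<longrightarrow>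
               ((\<lambda>\<theta>. astig r \<theta> / sin \<theta> powr \<alpha>) \<longlongrightarrow> 0) (at_right 0)) \<and>
            (\<mu> < ereal (\<alpha> + 1) \<longrightarrow>
               filterlim (\<lambda>\<theta>. astig r \<theta> / sin \<theta> powr \<alpha>) at_top (at_right 0) \<or>
               filterlim (\<lambda>\<theta>. astig r \<theta> / sin \<theta> powr \<alpha>) at_bot (at_right 0))))
       \<and>
         (isolated_umbilic_pi r \<longrightarrow> (\<forall>\<mu>. umbilic_slope_pi r \<mu> \<longrightarrow>
            (\<mu> > ereal (\<alpha> + 1) \<longrightarrow>
               ((\<lambda>\<theta>. astig r \<theta> / sin \<theta> powr \<alpha>) \<longlongrightarrow> 0) (at_left pi)) \<and>
            (\<mu> < ereal (\<alpha> + 1) \<longrightarrow>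
               filterlim (\<lambda>\<theta>. astig r \<theta> / sin \<theta> powr \<alpha>) at_top (at_left pi) \<or>
               filterlim (\<lambda>\<theta>. astig r \<theta> / sin \<theta> powr \<alpha>) at_bot (at_left pi))))"
proof
  have C3: "C3_real r" and ev0: "\<And>\<theta>. r (- \<theta>) = r \<theta>" and evpi: "\<And>\<theta>. r (pi + \<theta>) = r (pi - \<theta>)"
    using assms unfolding in_W3_def by auto
  show "isolated_umbilic_0 r \<longrightarrow> (\<forall>\<mu>. umbilic_slope_0 r \<mu> \<longrightarrow>
            (\<mu> > ereal (\<alpha> + 1) \<longrightarrow>
               ((\<lambda>\<theta>. astig r \<theta> / sin \<theta> powr \<alpha>) \<longlongrightarrow> 0) (at_right 0)) \<and>
            (\<mu> < ereal (\<alpha> + 1) \<longrightarrow>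
               filterlim (\<lambda>\<theta>. astig r \<theta> / sin \<theta> powr \<alpha>) at_top (at_right 0) \<or>
               filterlim (\<lambda>\<theta>. astig r \<theta> / sin \<theta> powr \<alpha>) at_bot (at_right 0)))"
    by (rule at0[OF C3 ev0])
  show "isolated_umbilic_pi r \<longrightarrow> (\<forall>\<mu>. umbilic_slope_pi r \<mu> \<longrightarrow>
            (\<mu> > ereal (\<alpha> + 1) \<longrightarrow>
               ((\<lambda>\<theta>. astig r \<theta> / sin \<theta> powr \<alpha>) \<longlongrightarrow> 0) (at_left pi)) \<and>
            (\<mu> < ereal (\<alpha> + 1) \<longrightarrow>
               filterlim (\<lambda>\<theta>. astig r \<theta> / sin \<theta> powr \<alpha>) at_top (at_left pi) \<or>
               filterlim (\<lambda>\<theta>. astig r \<theta> / sin \<theta> powr \<alpha>) at_bot (at_left pi)))"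
    by (rule atpi[OF C3 evpi])
qed

end
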